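(* Let $\omega\ge2$ and let $\Gamma$ be an $\omega$-clique regular finite simple graph with $m$ cliques of order $\omega$, listed as $c_1,\dots,c_m$. Let $A_C$ be the adjacency matrix of $C_\omega(\Gamma)$ with vertices ordered $c_1,\dots,c_m$, and let $A_L$ be the adjacency matrix of the line graph $L(\Gamma)$ with the edges ordered $e_1,\dots,e_{m\binom{\omega}{2}}$ so that, for each $i$, the edges $e_{(i-1)\binom{\omega}{2}+1},\dots,e_{i\binom{\omega}{2}}$ are exactly the edges of the clique $c_i$. Let $\tilde A=6\binom{\omega}{3}I_m+(\omega-1)^2A_C$, and let $\varphi:\mathbb{R}^m\to\mathbb{R}^{m\binom{\omega}{2}}$ map $(a_1,\dots,a_m)^T$ to the vector obtained by repeating each coordinate $a_i$ consecutively $\binom{\omega}{2}$ times. Then for all $v\in\mathbb{R}^m$, \[v^T\tilde A v=\varphi(v)^T A_L\,\varphi(v).\]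
   Context: A graph is $\omega$-clique regular if it has a nonempty edge set and every edge lies in exactly one clique of order $\omega$ (so the edge sets of the $\omega$-cliques partition the edge set). $C_\omega(\Gamma)$ has as vertices the cliques of order $\omega$, two distinct ones adjacent iff they have nonempty intersection. $L(\Gamma)$ is the line graph (vertices = edges of $\Gamma$, adjacent iff sharing an endpoint). *)

theory Defs
  imports "Jordan_Normal_Form.Matrix"
begin

definition simple_graph :: "'a set \<Rightarrow> 'a set set \<Rightarrow> bool" where
  "simple_graph V E \<longleftrightarrow> finite V \<and> (\<forall>e\<in>E. e \<subseteq> V \<and> card e = 2)"

definition is_clique :: "'a set \<Rightarrow> 'a set set \<Rightarrow> 'a set \<Rightarrow> bool" where
  "is_clique V E K \<longleftrightarrow> K \<subseteq> V \<and> (\<forall>x\<in>K. \<forall>y\<in>K. x \<noteq> y \<longrightarrow> {x, y} \<in> E)"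

definition cliques_of_order :: "'a set \<Rightarrow> 'a set set \<Rightarrow> nat \<Rightarrow> 'a set set" where
  "cliques_of_order V E w = {K. is_clique V E K \<and> card K = w}"

definition clique_regular :: "'a set \<Rightarrow> 'a set set \<Rightarrow> nat \<Rightarrow> bool" where
  "clique_regular V E w \<longleftrightarrow> E \<noteq> {} \<and>
     (\<forall>e\<in>E. \<exists>!K. K \<in> cliques_of_order V E w \<and> e \<subseteq> K)"

definition clique_graph_adj :: "'a set list \<Rightarrow> real mat" where
  "clique_graph_adj cs = mat (length cs) (length cs)
     (\<lambda>(i, j). if i \<noteq> j \<and> cs ! i \<inter> cs ! j \<noteq> {} then 1 else 0)"

definition line_graph_adj :: "'a set list \<Rightarrow> real mat" where
  "line_graph_adj es = mat (length es) (length es)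
     (\<lambda>(k, l). if k \<noteq> l \<and> es ! k \<inter> es ! l \<noteq> {} then 1 else 0)"

definition repeat_vec :: "nat \<Rightarrow> real vec \<Rightarrow> real vec" where
  "repeat_vec b v = vec (dim_vec v * b) (\<lambda>k. v $ (k div b))"

end

theory Submission imports Defs begin

lemma edges_in: assumes "simple_graph V E" "is_clique V E K"
  shows "{e\<in>E. e\<subseteq>K} = {B. B\<subseteq>K \<and> card B = 2}"
  using assms unfolding simple_graph_def is_clique_def
  by (auto simp: card_2_iff)

lemma star_card: assumes "finite K" "x \<in> S"
  shows "card ((\<lambda>z. {x,z}) ` (K - S)) = card (K - S)"
  apply (rule card_image)
  using assms by (auto simp: inj_on_def doubleton_eq_iff)

lemma inner_same: assumes "finite K" "e \<subseteq> K" "card e = 2"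
  shows "card {f\<in>{B. B\<subseteq>K \<and> card B = 2}. f\<noteq>e \<and> f\<inter>e\<noteq>{}} = 2*(card K - 2)"
proof -
  obtain x y where e: "e = {x,y}" "x\<noteq>y" using assms(3) by (auto simp: card_2_iff)
  have xy: "x\<in>K" "y\<in>K" using e assms(2) by auto
  have "{f\<in>{B. B\<subseteq>K \<and> card B = 2}. f\<noteq>e \<and> f\<inter>e\<noteq>{}}
      = (\<lambda>z. {x,z}) ` (K - {x,y}) \<union> (\<lambda>z. {y,z}) ` (K - {x,y})" (is "?L = ?R")
  proof
    show "?L \<subseteq> ?R"
    proof
      fix f assume "f \<in> ?L"
      then obtain a c where f: "f = {a,c}" "a\<noteq>c" "f \<subseteq> K" "f \<noteq> e" "f \<inter> e \<noteq> {}"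
        by (auto simp: card_2_iff)
      then show "f \<in> ?R" using e by (auto simp: doubleton_eq_iff)
    qed
  next
    show "?R \<subseteq> ?L" using e xy by auto
  qed
  also have "card \<dots> = card (K - {x,y}) + card (K - {x,y})"
    apply (subst card_Un_disjoint)
    using assms(1) e by (auto simp: star_card doubleton_eq_iff)
  also have "card (K - {x,y}) = card K - 2" using assms(1) e xy by (simp add: card_Diff_subset)
  finally show ?thesis by simp
qed

lemma inner_star: assumes "finite K" "x \<in> K"
  shows "card {f\<in>{B. B\<subseteq>K \<and> card B = 2}. x \<in> f} = card K - 1"
proof -
  have "{f\<in>{B. B\<subseteq>K \<and> card B = 2}. x \<in> f} = (\<lambda>z. {x,z}) ` (K - {x})"
    using assms by (auto simp: card_2_iff)
  then show ?thesis using star_card[OF assms(1), of x "{x}"] assms by simp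
qed
lemma grp: fixes m b :: nat shows "(\<Sum>k<m*b. F k) = (\<Sum>i<m. \<Sum>p<b. (F (i*b+p)::real))"
proof -
  have "(\<Sum>k<m*b. F k) = (\<Sum>i<m. sum F {i*b..<i*b+b})" using sum.nat_group[of F b m] by simp
  also have "\<dots> = (\<Sum>i<m. \<Sum>p<b. F (i*b+p))"
  proof -
    have "sum F {i*b..<i*b+b} = (\<Sum>p<b. F(i*b+p))" for i
      using sum.shift_bounds_nat_ivl[of F 0 "i*b" b] by (simp add: atLeast0LessThan add.commute)
    then show ?thesis by simp
  qed
  finally show ?thesis .
qed

lemma choose_id: "6 * (w choose 3) = (w choose 2) * (2 * (w - 2))"
proof -
  have a: "3 * (w choose 3) = w * ((w-1) choose 2)" using binomial_absorption[of 2 w] by (simp add: numeral_eq_Suc)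
  have b: "(w - 2) * (w choose 2) = w * ((w-1) choose 2)" using binomial_absorb_comp[of w 2] by simp
  show ?thesis using a b by (simp add: algebra_simps)
qed

lemma quad: assumes "M \<in> carrier_mat n n" "v \<in> carrier_vec n"
  shows "v \<bullet> (M *\<^sub>v v) = (\<Sum>i<n. \<Sum>j<n. v$i * M$$(i,j) * (v$j::real))"
  using assms by (simp add: scalar_prod_def row_def sum_distrib_left atLeast0LessThan mult.assoc)

lemma sum_nth_set: assumes "distinct xs"
  shows "(\<Sum>p<length xs. h (xs!p)) = (\<Sum>e\<in>set xs. (h e::real))"
  using sum.reindex_bij_betw[OF bij_betw_nth[OF assms refl refl], of h] by simp

lemma sum_ind: "finite A \<Longrightarrow> (\<Sum>f\<in>A. if P f then 1 else 0) = real (card {f\<in>A. P f})"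
  by (simp add: sum.inter_filter[symmetric])

definition gg :: "'a set \<Rightarrow> 'a set \<Rightarrow> real" where
  "gg e f = (if e \<noteq> f \<and> e \<inter> f \<noteq> {} then 1 else 0)"

lemma same_sum: assumes "finite K" "card K = w"
  shows "(\<Sum>e\<in>{B. B\<subseteq>K \<and> card B = 2}. \<Sum>f\<in>{B. B\<subseteq>K \<and> card B = 2}. gg e f) = real (6 * (w choose 3))"
proof -
  have fin: "finite {B. B\<subseteq>K \<and> card B = 2}" using assms(1) by simp
  have "(\<Sum>e\<in>{B. B\<subseteq>K \<and> card B = 2}. \<Sum>f\<in>{B. B\<subseteq>K \<and> card B = 2}. gg e f)
     = (\<Sum>e\<in>{B. B\<subseteq>K \<and> card B = 2}. real (2*(w-2)))"
  proof (intro sum.cong refl)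
    fix e assume e: "e \<in> {B. B\<subseteq>K \<and> card B = 2}"
    have "(\<Sum>f\<in>{B. B\<subseteq>K \<and> card B = 2}. gg e f) = (\<Sum>f\<in>{B. B\<subseteq>K \<and> card B = 2}. if f\<noteq>e \<and> f\<inter>e\<noteq>{} then 1 else 0)"
      unfolding gg_def by (intro sum.cong refl) (auto simp: Int_commute)
    also have "\<dots> = real (2*(w-2))" using inner_same[OF assms(1), of e] e assms(2) fin
      by (simp add: sum_ind)
    finally show "(\<Sum>f\<in>{B. B\<subseteq>K \<and> card B = 2}. gg e f) = real (2*(w-2))" .
  qed
  also have "\<dots> = real ((w choose 2) * (2*(w-2)))" using n_subsets[OF assms(1), of 2] assms(2) by simp
  also have "\<dots> = real (6 * (w choose 3))" by (simp only: choose_id)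
  finally show ?thesis .
qed

lemma diff_sum: assumes "finite K" "card K = w" "finite K'" "card K' = w" "K \<inter> K' = {x}"
  shows "(\<Sum>e\<in>{B. B\<subseteq>K \<and> card B = 2}. \<Sum>f\<in>{B. B\<subseteq>K' \<and> card B = 2}. gg e f) = real ((w-1)^2)"
proof -
  have x: "x \<in> K" "x \<in> K'" using assms(5) by auto
  have "(\<Sum>e\<in>{B. B\<subseteq>K \<and> card B = 2}. \<Sum>f\<in>{B. B\<subseteq>K' \<and> card B = 2}. gg e f)
    = (\<Sum>e\<in>{B. B\<subseteq>K \<and> card B = 2}. \<Sum>f\<in>{B. B\<subseteq>K' \<and> card B = 2}. (if x \<in> e then 1 else 0) * (if x \<in> f then 1 else 0))"
  proof (intro sum.cong refl)
    fix e f assume e: "e \<in> {B. B\<subseteq>K \<and> card B = 2}" and f: "f \<in> {B. B\<subseteq>K' \<and> card B = 2}"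
    have sub: "e \<inter> f \<subseteq> {x}" using e f assms(5) by auto
    show "gg e f = (if x \<in> e then 1 else 0) * (if x \<in> f then 1 else 0)"
    proof (cases "x \<in> e \<and> x \<in> f")
      case True
      have "e \<noteq> f"
      proof
        assume "e = f" then have "e \<subseteq> {x}" using sub by auto
        then have "card e \<le> 1" using card_mono[of "{x}" e] by simp
        then show False using e by simp
      qed
      then show ?thesis using True by (auto simp: gg_def)
    next
      case False
      then have "e \<inter> f = {}" using sub by auto
      then show ?thesis using False by (auto simp: gg_def)
    qed
  qed
  also have "\<dots> = (\<Sum>e\<in>{B. B\<subseteq>K \<and> card B = 2}. if x \<in> e then 1 else 0) * (\<Sum>f\<in>{B. B\<subseteq>K' \<and> card B = 2}. if x \<in> f then 1 else 0)"
    by (simp add: sum_product)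
  also have "\<dots> = real (w-1) * real (w-1)"
    using inner_star[OF assms(1), of x] inner_star[OF assms(3), of x] assms x
    by (simp add: sum_ind)
  finally show ?thesis by (simp add: power2_eq_square)
qed

lemma disj_sum: assumes "K \<inter> K' = {}"
  shows "(\<Sum>e\<in>{B. B\<subseteq>K \<and> card B = 2}. \<Sum>f\<in>{B. B\<subseteq>K' \<and> card B = 2}. gg e f) = 0"
  using assms by (intro sum.neutral ballI) (auto simp: gg_def)
lemma len_blk: fixes i m b :: nat assumes "i < m" "length es = m*b"
  shows "length (take b (drop (i*b) es)) = b"
proof -
  have "Suc i * b \<le> m * b" using assms(1) by (intro mult_le_mono1) simp
  then show ?thesis using assms(2) by simp
qed

lemma idx_lt: fixes i m p b :: nat assumes "i < m" "p < b" shows "i*b+p < m*b"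
proof -
  have "(i+1)*b \<le> m*b" using assms(1) by (intro mult_le_mono1) simp
  then show ?thesis using assms(2) by simp
qed

lemma nth_blk: fixes i m b p :: nat assumes "i<m" "p<b" "length es = m*b"
  shows "take b (drop (i*b) es) ! p = es ! (i*b+p)"
proof -
  have "i*b+p < length es" using idx_lt[OF assms(1,2)] assms(3) by simp
  then show ?thesis using assms(2) by simp
qed

theorem lemma3:
  fixes V :: "'a set" and E :: "'a set set" and w :: nat
    and cs :: "'a set list" and es :: "'a set list" and v :: "real vec"
  assumes "w \<ge> 2"
    and "simple_graph V E"
    and "clique_regular V E w"
    and "distinct cs" and "set cs = cliques_of_order V E w"
    and "distinct es" and "set es = E"
    and "length es = length cs * (w choose 2)"
    and "\<forall>i < length cs.
           set (take (w choose 2) (drop (i * (w choose 2)) es)) = {e \<in> E. e \<subseteq> cs ! i}"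
    and "v \<in> carrier_vec (length cs)"
  shows "v \<bullet> ((real (6 * (w choose 3)) \<cdot>\<^sub>m 1\<^sub>m (length cs)
                 + real ((w - 1)^2) \<cdot>\<^sub>m clique_graph_adj cs) *\<^sub>v v)
         = repeat_vec (w choose 2) v \<bullet> (line_graph_adj es *\<^sub>v repeat_vec (w choose 2) v)"
proof -
  define b where "b = w choose 2"
  define m where "m = length cs"
  define S where "S = (\<lambda>K::'a set. {B. B\<subseteq>K \<and> card B = 2})"
  have bpos: "b > 0" unfolding b_def using assms(1) by simp
  have cl: "is_clique V E (cs!i)" "card (cs!i) = w" "finite (cs!i)" if "i < m" for i
  proof -
    have "cs!i \<in> set cs" using that m_def by simp
    then have "cs!i \<in> cliques_of_order V E w" using assms(5) by simp
    then have c1: "is_clique V E (cs!i)" and c2: "card (cs!i) = w" by (auto simp: cliques_of_order_def)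
    show "is_clique V E (cs!i)" by (rule c1)
    show "card (cs!i) = w" by (rule c2)
    show "finite (cs!i)" using assms(1) c2 card.infinite by fastforce
  qed
  have les: "length es = m*b" using assms(8) unfolding b_def m_def .
  have blk: "(\<Sum>p<b. h (es!(i*b+p))) = (\<Sum>e\<in>S (cs!i). h e)" if "i < m" for i and h :: "'a set \<Rightarrow> real"
  proof -
    define T where "T = take b (drop (i*b) es)"
    have lenT: "length T = b" unfolding T_def by (rule len_blk[OF that les])
    have nthT: "T!p = es!(i*b+p)" if "p < b" for p
      unfolding T_def by (rule nth_blk[OF \<open>i < m\<close> that les])
    have dT: "distinct T" unfolding T_def using assms(6) by simp
    have sT: "set T = S (cs!i)" unfolding T_def S_def
      using assms(9) that edges_in[OF assms(2) cl(1)[OF that]] by (simp add: b_def m_def)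
    have "(\<Sum>p<length T. h (T!p)) = (\<Sum>e\<in>S (cs!i). h e)" using sum_nth_set[OF dT, of h] unfolding sT .
    then show ?thesis using lenT nthT by simp
  qed
  have ent: "(\<Sum>e\<in>S (cs!i). \<Sum>f\<in>S (cs!j). gg e f)
      = real (6 * (w choose 3)) * (if i = j then 1 else 0)
        + real ((w - 1)^2) * (if i \<noteq> j \<and> cs!i \<inter> cs!j \<noteq> {} then 1 else 0)"
    if "i < m" "j < m" for i j
  proof (cases "i = j")
    case True
    then show ?thesis using same_sum[OF cl(3) cl(2)] that by (simp add: S_def)
  next
    case False
    show ?thesis
    proof (cases "cs!i \<inter> cs!j = {}")
      case True
      then show ?thesis using disj_sum[OF True] False by (simp add: S_def)
    next
      case ne: False
      then obtain x where x: "x \<in> cs!i" "x \<in> cs!j" by auto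
      have "cs!i \<inter> cs!j = {x}"
      proof (rule ccontr)
        assume "cs!i \<inter> cs!j \<noteq> {x}"
        then obtain y where y: "y \<in> cs!i" "y \<in> cs!j" "y \<noteq> x" using x by blast
        have inE: "{x,y} \<in> E" using cl(1)[OF that(1)] x y unfolding is_clique_def by auto
        have "cs!i \<in> cliques_of_order V E w" "cs!j \<in> cliques_of_order V E w"
          using that assms(5) m_def nth_mem by (metis (no_types))+
        then have "cs!i = cs!j" using assms(3) inE x y unfolding clique_regular_def by blast
        then show False using False that assms(4) m_def by (simp add: nth_eq_iff_index_eq)
      qed
      then show ?thesis using diff_sum[OF cl(3) cl(2) cl(3) cl(2)] that False by (simp add: S_def)
    qed
  qed
  define M where "M = real (6 * (w choose 3)) \<cdot>\<^sub>m 1\<^sub>m m + real ((w - 1)^2) \<cdot>\<^sub>m clique_graph_adj cs"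
  have Mc: "M \<in> carrier_mat m m" by (simp add: M_def m_def clique_graph_adj_def)
  have Mij: "M$$(i,j) = real (6 * (w choose 3)) * (if i = j then 1 else 0)
        + real ((w - 1)^2) * (if i \<noteq> j \<and> cs!i \<inter> cs!j \<noteq> {} then 1 else 0)"
    if "i < m" "j < m" for i j
    using that by (simp add: M_def m_def clique_graph_adj_def)
  have vc: "v \<in> carrier_vec m" using assms(10) m_def by simp
  have LHS: "v \<bullet> (M *\<^sub>v v) = (\<Sum>i<m. \<Sum>j<m. v$i * (\<Sum>e\<in>S (cs!i). \<Sum>f\<in>S (cs!j). gg e f) * v$j)"
    unfolding quad[OF Mc vc] using Mij ent by simp
  define P where "P = repeat_vec b v"
  define L where "L = line_graph_adj es"
  have Pc: "P \<in> carrier_vec (m*b)" using vc by (simp add: P_def repeat_vec_def)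
  have Lc: "L \<in> carrier_mat (m*b) (m*b)" using assms(8) by (simp add: L_def line_graph_adj_def m_def b_def)
  have Pv: "P$(i*b+p) = v$i" if "i<m" "p<b" for i p
    using that idx_lt[OF that] vc bpos by (simp add: P_def repeat_vec_def)
  have Lg: "L$$(i*b+p, j*b+q) = gg (es!(i*b+p)) (es!(j*b+q))" if "i<m" "p<b" "j<m" "q<b" for i p j q
  proof -
    have l1: "i*b+p < length es" "j*b+q < length es"
      using idx_lt[OF that(1,2)] idx_lt[OF that(3,4)] assms(8) by (simp_all add: m_def b_def)
    then have "(i*b+p \<noteq> j*b+q) = (es!(i*b+p) \<noteq> es!(j*b+q))"
      using assms(6) by (simp add: nth_eq_iff_index_eq)
    then show ?thesis using l1 by (simp add: L_def line_graph_adj_def gg_def)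
  qed
  have "P \<bullet> (L *\<^sub>v P) = (\<Sum>k<m*b. \<Sum>l<m*b. P$k * L$$(k,l) * P$l)"
    by (rule quad[OF Lc Pc])
  also have "\<dots> = (\<Sum>i<m. \<Sum>p<b. \<Sum>j<m. \<Sum>q<b. P$(i*b+p) * L$$(i*b+p,j*b+q) * P$(j*b+q))"
    by (simp add: grp)
  also have "\<dots> = (\<Sum>i<m. \<Sum>p<b. \<Sum>j<m. \<Sum>q<b. v$i * gg (es!(i*b+p)) (es!(j*b+q)) * v$j)"
    by (intro sum.cong refl) (simp add: Pv Lg)
  also have "\<dots> = (\<Sum>i<m. \<Sum>j<m. v$i * (\<Sum>p<b. \<Sum>q<b. gg (es!(i*b+p)) (es!(j*b+q))) * v$j)"
    by (rule sum.cong[OF refl], subst sum.swap, simp add: sum_distrib_left sum_distrib_right)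
  also have "\<dots> = (\<Sum>i<m. \<Sum>j<m. v$i * (\<Sum>e\<in>S (cs!i). \<Sum>f\<in>S (cs!j). gg e f) * v$j)"
  proof (intro sum.cong refl)
    fix i j assume ij: "i \<in> {..<m}" "j \<in> {..<m}"
    have "(\<Sum>p<b. \<Sum>q<b. gg (es!(i*b+p)) (es!(j*b+q))) = (\<Sum>p<b. \<Sum>f\<in>S (cs!j). gg (es!(i*b+p)) f)"
      using blk ij by simp
    also have "\<dots> = (\<Sum>e\<in>S (cs!i). \<Sum>f\<in>S (cs!j). gg e f)"
      using blk[of i "\<lambda>e. \<Sum>f\<in>S (cs!j). gg e f"] ij by simp
    finally show "v$i * (\<Sum>p<b. \<Sum>q<b. gg (es!(i*b+p)) (es!(j*b+q))) * v$j
       = v$i * (\<Sum>e\<in>S (cs!i). \<Sum>f\<in>S (cs!j). gg e f) * v$j" by simp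
  qed
  finally show ?thesis using LHS unfolding M_def P_def L_def b_def m_def by simp
qed

end
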